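(* Let $n\geq 3$, $a>1$, $p,q\in\mathbb{R}$, and let $f_t(x)$, $x\in[1,a]$, solve $$\dot f=u''(x)\left(\frac{f''}{1+f'^2}+(n-1)\frac{xf'-f}{x^2+f^2}\right),\qquad f_t(1)=q,\ f_t(a)=p,$$ where $f_0$ satisfies the supercritical phase assumption $(n-1)\arctan\left(\frac{f_0}{x}\right)+\arctan(f_0')>(n-2)\frac{\pi}{2}$. Then $f_t(x)>0$ for all $t\geq 0$ for which the flow is defined.
   Context: This is the line bundle mean curvature flow on the blowup of $\mathbb{P}^n$ at a point under Calabi symmetry, written in the Legendre coordinate $x\in[1,a]$: $u''$ is the smooth function of $x$ coming from the Calabi-symmetric K\"ahler form $\omega=i\partial\bar\partial u$ in $a[H]-[E]$ (positive on $(1,a)$, vanishing at the endpoints), and $f$ encodes a Calabi-symmetric form $\alpha_t$ in $p[H]-q[E]$ whose eigenvalues relative to $\omega$ are $f/x$ (multiplicity $n-1$) and $f'$, so its angle is $\Theta=(n-1)\arctan(f/x)+\arctan(f')$. The supercritical phase condition $\Theta>(n-2)\frac\pi2$ is preserved along the flow. *)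

theory Defs
  imports "HOL-Analysis.Analysis"
begin

text \<open>Lagrangian angle of the Calabi-symmetric form: eigenvalues f/x (multiplicity n-1) and f'.\<close>
definition phase :: "nat \<Rightarrow> real \<Rightarrow> real \<Rightarrow> real \<Rightarrow> real" where
  "phase n x fx dfx = (real n - 1) * arctan (fx / x) + arctan dfx"

definition flow_rhs :: "nat \<Rightarrow> real \<Rightarrow> real \<Rightarrow> real \<Rightarrow> real \<Rightarrow> real \<Rightarrow> real" where
  "flow_rhs n upp x fx dfx ddfx =
     upp * (ddfx / (1 + dfx ^ 2) + (real n - 1) * (x * dfx - fx) / (x ^ 2 + fx ^ 2))"

end

theory Submission
  imports Defs
begin

theorem lemma4p3:
  fixes n :: nat and a p q T :: real
    and upp :: "real \<Rightarrow> real"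
    and f ft fx fxx :: "real \<Rightarrow> real \<Rightarrow> real"
  assumes n3: "n \<ge> 3" and a1: "a > 1" and T0: "T > 0"
    and upp_cont: "continuous_on {1..a} upp"
    and upp_pos: "\<And>x. x \<in> {1<..<a} \<Longrightarrow> upp x > 0"
    and upp_1: "upp 1 = 0" and upp_a: "upp a = 0"
    and dx: "\<And>t x. t \<in> {0..<T} \<Longrightarrow> x \<in> {1..a} \<Longrightarrow>
               ((\<lambda>y. f t y) has_real_derivative fx t x) (at x within {1..a})"
    and dxx: "\<And>t x. t \<in> {0..<T} \<Longrightarrow> x \<in> {1..a} \<Longrightarrow>
               ((\<lambda>y. fx t y) has_real_derivative fxx t x) (at x within {1..a})"
    and dt: "\<And>t x. t \<in> {0..<T} \<Longrightarrow> x \<in> {1..a} \<Longrightarrow>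
               ((\<lambda>s. f s x) has_real_derivative ft t x) (at t within {0..<T})"
    and cont: "continuous_on ({0..<T} \<times> {1..a}) (\<lambda>(t, x). f t x)"
              "continuous_on ({0..<T} \<times> {1..a}) (\<lambda>(t, x). fx t x)"
              "continuous_on ({0..<T} \<times> {1..a}) (\<lambda>(t, x). fxx t x)"
              "continuous_on ({0..<T} \<times> {1..a}) (\<lambda>(t, x). ft t x)"
    and pde: "\<And>t x. t \<in> {0..<T} \<Longrightarrow> x \<in> {1..a} \<Longrightarrow>
               ft t x = flow_rhs n (upp x) x (f t x) (fx t x) (fxx t x)"
    and bc1: "\<And>t. t \<in> {0..<T} \<Longrightarrow> f t 1 = q"
    and bca: "\<And>t. t \<in> {0..<T} \<Longrightarrow> f t a = p"
    and super0: "\<And>x. x \<in> {1..a} \<Longrightarrow> phase n x (f 0 x) (fx 0 x) > (real n - 2) * (pi / 2)"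
  shows "\<forall>t \<in> {0..<T}. \<forall>x \<in> {1..a}. f t x > 0"
proof (rule ccontr)
  assume "\<not> (\<forall>t \<in> {0..<T}. \<forall>x \<in> {1..a}. f t x > 0)"
  then obtain ts xs where ts: "ts \<in> {0..<T}" and xs: "xs \<in> {1..a}" and fneg: "f ts xs \<le> 0"
    by (auto simp: not_less)
  have T0': "0 \<in> {0..<T}" using T0 by simp
  have pos0: "f 0 x > 0" if x: "x \<in> {1..a}" for x
  proof -
    have "phase n x (f 0 x) (fx 0 x) > (real n - 2) * (pi / 2)" using super0 x by blast
    moreover have "arctan (fx 0 x) < pi / 2" by (rule arctan_ubound)
    ultimately have "(real n - 1) * arctan (f 0 x / x) > (real n - 3) * (pi / 2)"
      unfolding phase_def by (simp add: algebra_simps)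
    moreover have "(real n - 3) * (pi / 2) \<ge> 0" using n3 by simp
    ultimately have "(real n - 1) * arctan (f 0 x / x) > 0" by linarith
    moreover have "real n - 1 > 0" using n3 by simp
    ultimately have "arctan (f 0 x / x) > 0" by (simp add: zero_less_mult_iff)
    hence "f 0 x / x > 0" by (simp add: arctan_less_zero_iff less_le) 
    moreover have "x > 0" using x by simp
    ultimately show ?thesis by (simp add: zero_less_divide_iff)
  qed
  have contx: "continuous_on {1..a} (\<lambda>y. f t y)" if "t \<in> {0..<T}" for t
    by (rule DERIV_continuous_on[OF dx[OF that]])
  obtain xm where xm: "xm \<in> {1..a}" and xmmin: "\<And>y. y \<in> {1..a} \<Longrightarrow> f 0 xm \<le> f 0 y"
    using continuous_attains_inf[OF compact_Icc _ contx[OF T0']] a1 by auto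
  define \<delta> where "\<delta> = f 0 xm / 2"
  have \<delta>pos: "\<delta> > 0" using pos0[OF xm] by (simp add: \<delta>_def)
  have \<delta>lt: "f 0 y > \<delta>" if "y \<in> {1..a}" for y
    using xmmin[OF that] pos0[OF xm] by (simp add: \<delta>_def)
  obtain xM where xM: "xM \<in> {1..a}" and xMmax: "\<And>y. y \<in> {1..a} \<Longrightarrow> upp y \<le> upp xM"
    using continuous_attains_sup[OF compact_Icc _ upp_cont] a1 by auto
  define M where "M = upp xM"
  have M0: "M \<ge> 0" using xMmax[of 1] a1 upp_1 by (simp add: M_def)
  define K where "K = M * (real n - 1) + 1"
  have K1: "K \<ge> 1" using M0 n3 by (simp add: K_def)
  define c where "c t = \<delta> * exp (- K * t)" for t
  have cpos: "c t > 0" for t using \<delta>pos by (simp add: c_def)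
  have cle: "c t \<le> \<delta>" if "t \<ge> 0" for t
  proof -
    have "exp (- K * t) \<le> 1" using K1 that by simp
    thus ?thesis using \<delta>pos unfolding c_def by (simp add: mult_le_cancel_left1)
  qed
  have cder: "(c has_real_derivative (- K * c t)) (at t)" for t
    unfolding c_def by (auto intro!: derivative_eq_intros)
  define g where "g t x = f t x - c t" for t x
  have q0: "q = f 0 1" using bc1[OF T0'] by simp
  have p0: "p = f 0 a" using bca[OF T0'] by simp
  have gb1: "g t 1 > 0" if "t \<in> {0..<T}" for t
    using bc1[OF that] cle[of t] that \<delta>lt[of 1] a1 q0 by (simp add: g_def)
  have gba: "g t a > 0" if "t \<in> {0..<T}" for t
    using bca[OF that] cle[of t] that \<delta>lt[of a] a1 p0 by (simp add: g_def)
  define Z where "Z = {z \<in> {0..ts} \<times> {1..a}. g (fst z) (snd z) \<le> 0}"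
  have sub: "{0..ts} \<times> {1..a} \<subseteq> {0..<T} \<times> {1..a}" using ts by auto
  have gcont: "continuous_on ({0..ts} \<times> {1..a}) (\<lambda>z. g (fst z) (snd z))"
  proof -
    have "continuous_on ({0..ts} \<times> {1..a}) (\<lambda>(t, x). f t x)"
      using continuous_on_subset[OF cont(1) sub] .
    moreover have "continuous_on ({0..ts} \<times> {1..a}) (\<lambda>z. c (fst z))"
      unfolding c_def by (intro continuous_intros)
    ultimately show ?thesis unfolding g_def
      by (auto intro!: continuous_on_diff simp: case_prod_beta)
  qed
  have Zclosed: "closed Z" unfolding Z_def
    by (rule continuous_on_closed_Collect_le[OF gcont continuous_on_const])
      (intro closed_Times closed_atLeastAtMost)
  have Zcomp: "compact Z"
  proof -
    have "compact ({0..ts} \<times> {1..a} \<inter> Z)"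
      by (intro compact_Int_closed compact_Times compact_Icc Zclosed)
    moreover have "{0..ts} \<times> {1..a} \<inter> Z = Z" unfolding Z_def by auto
    ultimately show ?thesis by simp
  qed
  have "(ts, xs) \<in> Z" unfolding Z_def g_def using ts xs fneg cpos[of ts] by auto
  hence Zne: "Z \<noteq> {}" by auto
  obtain z1 where z1: "z1 \<in> Z" and z1min: "\<And>z. z \<in> Z \<Longrightarrow> fst z1 \<le> fst z"
    using continuous_attains_inf[OF Zcomp Zne continuous_on_fst[OF continuous_on_id]] by auto
  define t1 where "t1 = fst z1"
  have t1r: "t1 \<in> {0..ts}" using z1 unfolding Z_def t1_def by auto
  have t1T: "t1 \<in> {0..<T}" using t1r ts by auto
  have before: "g t x > 0" if "0 \<le> t" "t < t1" "x \<in> {1..a}" for t x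
  proof (rule ccontr)
    assume "\<not> g t x > 0"
    hence "(t, x) \<in> Z" unfolding Z_def using that t1r by auto
    from z1min[OF this] that show False by (simp add: t1_def)
  qed
  have g1neg: "g t1 (snd z1) \<le> 0" using z1 unfolding Z_def t1_def by auto
  have snd1: "snd z1 \<in> {1..a}" using z1 unfolding Z_def by auto
  obtain x0 where x0: "x0 \<in> {1..a}" and x0min: "\<And>y. y \<in> {1..a} \<Longrightarrow> f t1 x0 \<le> f t1 y"
    using continuous_attains_inf[OF compact_Icc _ contx[OF t1T]] a1 by auto
  have gx0: "g t1 x0 \<le> 0" using x0min[OF snd1] g1neg by (simp add: g_def)
  have gx0min: "g t1 x0 \<le> g t1 y" if "y \<in> {1..a}" for y using x0min[OF that] by (simp add: g_def)
  have x0ne1: "x0 \<noteq> 1" using gb1[OF t1T] gx0 by auto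
  have x0nea: "x0 \<noteq> a" using gba[OF t1T] gx0 by auto
  have x0i: "1 < x0" "x0 < a" using x0 x0ne1 x0nea by auto
  have t1pos: "t1 > 0"
  proof (rule ccontr)
    assume "\<not> t1 > 0" hence "t1 = 0" using t1r by simp
    thus False using gx0 \<delta>lt[OF x0] cle[of 0] by (simp add: g_def)
  qed
  have t1i: "0 < t1" "t1 < T" using t1pos t1T by auto
  have atx: "at x0 within {1..a} = at x0" by (rule at_within_Icc_at[OF x0i])
  have dfx: "((\<lambda>y. f t1 y) has_real_derivative fx t1 x0) (at x0)"
    using dx[OF t1T x0] atx by simp
  have dfxx: "((\<lambda>y. fx t1 y) has_real_derivative fxx t1 x0) (at x0)"
    using dxx[OF t1T x0] atx by simp
  have fx0: "fx t1 x0 = 0"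
  proof (rule DERIV_local_min[OF dfx])
    show "0 < min (x0 - 1) (a - x0)" using x0i by simp
    show "\<forall>y. \<bar>x0 - y\<bar> < min (x0 - 1) (a - x0) \<longrightarrow> f t1 x0 \<le> f t1 y"
      using x0min by (auto simp: abs_if split: if_splits)
  qed
  have fxx0: "fxx t1 x0 \<ge> 0"
  proof (rule ccontr)
    assume "\<not> fxx t1 x0 \<ge> 0"
    then obtain d where d: "d > 0" and dd: "\<And>h. h > 0 \<Longrightarrow> h < d \<Longrightarrow> fx t1 x0 > fx t1 (x0 + h)"
      using DERIV_neg_dec_right[OF dfxx] by force
    define h0 where "h0 = min d (a - x0) / 2"
    have h0: "h0 > 0" "h0 < d" "x0 + h0 < a" using d x0i by (auto simp: h0_def min_def field_simps)
    have "\<exists>z. x0 < z \<and> z < x0 + h0 \<and> f t1 (x0 + h0) - f t1 x0 = (x0 + h0 - x0) * fx t1 z"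
    proof (rule MVT2)
      show "x0 < x0 + h0" using h0 by simp
      fix y assume y: "x0 \<le> y" "y \<le> x0 + h0"
      hence "at y within {1..a} = at y" using x0i h0 by (intro at_within_Icc_at) auto
      thus "((\<lambda>y. f t1 y) has_real_derivative fx t1 y) (at y)"
        using dx[OF t1T, of y] y x0i h0 by auto
    qed
    then obtain z where z: "x0 < z" "z < x0 + h0" "f t1 (x0 + h0) - f t1 x0 = h0 * fx t1 z" by auto
    have "fx t1 z < 0" using dd[of "z - x0"] z h0 fx0 by auto
    hence "h0 * fx t1 z < 0" using h0(1) by (rule mult_pos_neg[rotated])
    hence "f t1 (x0 + h0) < f t1 x0" using z(3) by linarith
    moreover have "f t1 x0 \<le> f t1 (x0 + h0)" using x0min h0 x0i by auto
    ultimately show False by simp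
  qed
  have upp0: "upp x0 > 0" using upp_pos x0i by auto
  have uppM: "upp x0 \<le> M" using xMmax[OF x0] by (simp add: M_def)
  define F where "F = f t1 x0"
  have Fle: "F \<le> c t1" using gx0 by (simp add: g_def F_def)
  have termb: "(real n - 1) * (x0 * 0 - F) / (x0 ^ 2 + F ^ 2) \<ge> - ((real n - 1) * c t1)"
  proof (cases "F \<le> 0")
    case True
    have "(real n - 1) * (x0 * 0 - F) / (x0 ^ 2 + F ^ 2) \<ge> 0"
      using True n3 by (intro divide_nonneg_nonneg mult_nonneg_nonneg) auto
    moreover have "(real n - 1) * c t1 \<ge> 0" using n3 cpos[of t1] by simp
    ultimately show ?thesis by linarith
  next
    case False
    have "1 \<le> x0 ^ 2" using x0i by (intro one_le_power) auto
    moreover have "0 \<le> F ^ 2" by (rule zero_le_power2)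
    ultimately have den: "x0 ^ 2 + F ^ 2 \<ge> 1" by linarith
    have "F / (x0 ^ 2 + F ^ 2) \<le> F / 1"
      using False den by (intro divide_left_mono) auto
    hence "F / (x0 ^ 2 + F ^ 2) \<le> F" by simp
    hence "F / (x0 ^ 2 + F ^ 2) \<le> c t1" using Fle by linarith
    hence "(real n - 1) * (F / (x0 ^ 2 + F ^ 2)) \<le> (real n - 1) * c t1"
      using n3 by (intro mult_left_mono) auto
    thus ?thesis by simp
  qed
  have ftlow: "ft t1 x0 \<ge> - (M * (real n - 1) * c t1)"
  proof -
    have "ft t1 x0 = upp x0 * (fxx t1 x0 / (1 + 0) + (real n - 1) * (x0 * 0 - F) / (x0 ^ 2 + F ^ 2))"
      using pde[OF t1T x0] fx0 by (simp add: flow_rhs_def F_def)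
    also have "\<dots> \<ge> upp x0 * (- ((real n - 1) * c t1))"
      using termb fxx0 upp0 by (intro mult_left_mono) auto
    finally have "ft t1 x0 \<ge> - (upp x0 * ((real n - 1) * c t1))" by simp
    moreover have "upp x0 * ((real n - 1) * c t1) \<le> M * ((real n - 1) * c t1)"
      using uppM n3 cpos[of t1] by (intro mult_right_mono) auto
    ultimately show ?thesis by (simp add: algebra_simps)
  qed
  have D: "ft t1 x0 - (- K * c t1) > 0"
    using ftlow cpos[of t1] by (simp add: K_def algebra_simps)
  have att: "at t1 within {0..<T} = at t1"
    using t1i by (intro at_within_interior) auto
  have dg: "((\<lambda>s. g s x0) has_real_derivative (ft t1 x0 - (- K * c t1))) (at t1)"
  proof -
    have "((\<lambda>s. f s x0) has_real_derivative ft t1 x0) (at t1)" using dt[OF t1T x0] att by simp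
    from DERIV_diff[OF this cder[of t1]] show ?thesis unfolding g_def .
  qed
  obtain d where d: "d > 0" and dd: "\<And>h. h > 0 \<Longrightarrow> h < d \<Longrightarrow> g (t1 - h) x0 < g t1 x0"
    using DERIV_pos_inc_left[OF dg D] by force
  define h0 where "h0 = min d t1 / 2"
  have h0: "h0 > 0" "h0 < d" "h0 < t1" using d t1pos by (auto simp: h0_def)
  have "g (t1 - h0) x0 > 0" using before[of "t1 - h0" x0] h0 x0 by auto
  moreover have "g (t1 - h0) x0 < g t1 x0" using dd h0 by auto
  ultimately show False using gx0 by simp
qed

end
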